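(* Let $p$ be a prime and $G$ a finite $p$-group in which every non-abelian subgroup $H$ satisfies $C_G(H)\le H$. If $g\in G\setminus\Phi(G)$, then $C_G(g)$ is abelian.
   Context: $\Phi(G)$ denotes the Frattini subgroup of $G$ and $C_G(\cdot)$ centralizers. *)

theory Defs
  imports "HOL-Algebra.Algebra"
begin

definition centralizer :: "('a, 'b) monoid_scheme \<Rightarrow> 'a set \<Rightarrow> 'a set" where
  "centralizer G S = {x \<in> carrier G. \<forall>y\<in>S. x \<otimes>\<^bsub>G\<^esub> y = y \<otimes>\<^bsub>G\<^esub> x}"

definition abelian_set :: "('a, 'b) monoid_scheme \<Rightarrow> 'a set \<Rightarrow> bool" where
  "abelian_set G H \<longleftrightarrow> (\<forall>x\<in>H. \<forall>y\<in>H. x \<otimes>\<^bsub>G\<^esub> y = y \<otimes>\<^bsub>G\<^esub> x)"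

definition maximal_subgroup :: "('a, 'b) monoid_scheme \<Rightarrow> 'a set \<Rightarrow> bool" where
  "maximal_subgroup G H \<longleftrightarrow> subgroup H G \<and> H \<noteq> carrier G \<and>
     (\<forall>K. subgroup K G \<and> H \<subseteq> K \<longrightarrow> K = H \<or> K = carrier G)"

text \<open>Frattini subgroup: intersection of all maximal subgroups (= G if there are none).\<close>
definition frattini :: "('a, 'b) monoid_scheme \<Rightarrow> 'a set" where
  "frattini G = carrier G \<inter> \<Inter> {H. maximal_subgroup G H}"

end

theory Submission
  imports Defs
begin

lemma dvd_card_partition:
  fixes p :: nat
  assumes "finite S"
    and "\<And>x. x \<in> S \<Longrightarrow> x \<in> f x \<and> f x \<subseteq> S \<and> p dvd card (f x)"
    and "\<And>x y. x \<in> S \<Longrightarrow> y \<in> f x \<Longrightarrow> f y = f x"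
  shows "p dvd card S"
proof -
  have U: "\<Union>(f ` S) = S" using assms(2) by blast
  have pw: "pairwise disjnt (f ` S)"
  proof (rule pairwiseI)
    fix A B assume "A \<in> f ` S" "B \<in> f ` S" "A \<noteq> B"
    then obtain x y where x: "x \<in> S" "A = f x" and y: "y \<in> S" "B = f y" by blast
    show "disjnt A B"
    proof (rule ccontr)
      assume "\<not> disjnt A B"
      then obtain z where "z \<in> f x" "z \<in> f y" using x y unfolding disjnt_def by blast
      then have "f z = f x" "f z = f y" using assms(3)[OF x(1)] assms(3)[OF y(1)] by blast+
      then show False using \<open>A \<noteq> B\<close> x y by simp
    qed
  qed
  have fin: "\<And>A. A \<in> f ` S \<Longrightarrow> finite A" using assms(1,2) finite_subset by blast
  have "card S = sum card (f ` S)" using card_Union_disjoint[OF pw fin] U by simp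
  moreover have "p dvd sum card (f ` S)" proof (rule dvd_sum)
    fix A assume "A \<in> f ` S" then show "p dvd card A" using assms(2) by blast
  qed
  ultimately show ?thesis by simp
qed

lemma (in group) centralizer_subgroup:
  assumes "S \<subseteq> carrier G"
  shows "subgroup (centralizer G S) G"
proof (rule subgroupI)
  show "centralizer G S \<subseteq> carrier G" unfolding centralizer_def by auto
  show "centralizer G S \<noteq> {}" using assms unfolding centralizer_def by (auto intro!: exI[of _ \<one>])
  fix a b assume a: "a \<in> centralizer G S" and b: "b \<in> centralizer G S"
  show "inv a \<in> centralizer G S"
    unfolding centralizer_def
  proof (safe)
    show "inv a \<in> carrier G" using a unfolding centralizer_def by auto
    fix y assume y: "y \<in> S"
    have ac: "a \<in> carrier G" and ay: "a \<otimes> y = y \<otimes> a" using a y unfolding centralizer_def by auto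
    have yc: "y \<in> carrier G" using y assms by auto
    have "inv a \<otimes> y = inv a \<otimes> (y \<otimes> a) \<otimes> inv a" using ac yc by (simp add: m_assoc)
    also have "\<dots> = inv a \<otimes> (a \<otimes> y) \<otimes> inv a" using ay by simp
    also have "\<dots> = y \<otimes> inv a" using ac yc by (simp add: m_assoc[symmetric])
    finally show "inv a \<otimes> y = y \<otimes> inv a" .
  qed
  show "a \<otimes> b \<in> centralizer G S"
    unfolding centralizer_def
  proof (safe)
    show "a \<otimes> b \<in> carrier G" using a b unfolding centralizer_def by auto
    fix y assume y: "y \<in> S"
    have ac: "a \<in> carrier G" and ay: "a \<otimes> y = y \<otimes> a" using a y unfolding centralizer_def by auto
    have bc: "b \<in> carrier G" and by': "b \<otimes> y = y \<otimes> b" using b y unfolding centralizer_def by auto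
    have yc: "y \<in> carrier G" using y assms by auto
    have "a \<otimes> b \<otimes> y = a \<otimes> (y \<otimes> b)" using ac bc yc by' by (simp add: m_assoc)
    also have "\<dots> = (a \<otimes> y) \<otimes> b" using ac bc yc by (simp add: m_assoc)
    also have "\<dots> = y \<otimes> (a \<otimes> b)" using ac bc yc ay by (simp add: m_assoc)
    finally show "a \<otimes> b \<otimes> y = y \<otimes> (a \<otimes> b)" .
  qed
qed


lemma (in group) lcos_const_sub:
  assumes "subgroup H G" "h \<in> H"
  shows "h <# H = H"
proof
  show "h <# H \<subseteq> H" using assms unfolding l_coset_def by (auto intro: subgroup.m_closed)
  show "H \<subseteq> h <# H"
  proof
    fix k assume k: "k \<in> H"
    have hc: "h \<in> carrier G" "k \<in> carrier G" using subgroup.mem_carrier[OF assms(1)] assms(2) k by auto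
    have "inv h \<otimes> k \<in> H" using subgroup.m_closed[OF assms(1) subgroup.m_inv_closed[OF assms(1) assms(2)] k] .
    moreover have "h \<otimes> (inv h \<otimes> k) = k" using hc by (simp add: m_assoc[symmetric])
    ultimately show "k \<in> h <# H" unfolding l_coset_def by force
  qed
qed

lemma (in group) conj_rcos:
  assumes "subgroup H G" "h \<in> H" "x \<in> carrier G"
  shows "h <# (H #> x) #> inv h = H #> (x \<otimes> inv h)"
proof -
  have Hs: "H \<subseteq> carrier G" using subgroup.subset[OF assms(1)] .
  have hc: "h \<in> carrier G" using Hs assms(2) by auto
  have "h <# (H #> x) = (h <# H) #> x" using coset_assoc[OF hc assms(3) Hs] .
  also have "\<dots> = H #> x" using lcos_const_sub[OF assms(1,2)] by simp
  finally have "h <# (H #> x) #> inv h = (H #> x) #> inv h" by simp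
  also have "\<dots> = H #> (x \<otimes> inv h)" using coset_mult_assoc[OF Hs assms(3)] hc by simp
  finally show ?thesis .
qed

lemma (in group) pgroup_normalizer_grows:
  fixes p n :: nat
  assumes p: "Factorial_Ring.prime p" and fin: "finite (carrier G)" and ord: "order G = p ^ n"
    and H: "subgroup H G" and Hne: "H \<noteq> carrier G"
  shows "\<exists>x\<in>carrier G - H. \<forall>h\<in>H. x \<otimes> h \<otimes> inv x \<in> H"
proof -
  define EE where "EE = {Q1. Q1 \<subseteq> carrier G}"
  define \<phi> where "\<phi> = (\<lambda>g. \<lambda>Q1\<in>EE. g <# Q1 #> inv g)"
  define GH where "GH = G\<lparr>carrier := H\<rparr>"
  have A: "group_action G EE \<phi>" unfolding EE_def \<phi>_def by (rule action_by_conjugation_on_power_set)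
  have B: "group_action GH EE \<phi>" unfolding GH_def using group_action.induced_action[OF A H] .
  have Hs: "H \<subseteq> carrier G" using subgroup.subset[OF H] .
  have finH: "finite H" using finite_subset[OF Hs fin] .
  have cardH: "card H dvd p ^ n" using lagrange[OF H] ord dvd_triv_right[of "card H" "card (rcosets H)"] by simp
  then obtain k where k: "k \<le> n" "card H = p ^ k" using divides_primepow_nat[OF p] by auto
  have "H \<subset> carrier G" using Hs Hne by auto
  then have "card H < order G" unfolding order_def using psubset_card_mono[OF fin] by simp
  then have kn: "k < n" using k ord prime_gt_1_nat[OF p] by (simp add: power_strict_increasing_iff)
  have e1: "card (rcosets H) * p ^ k = p ^ n" using lagrange[OF H] ord k by simp
  have e2: "p ^ n = p ^ (n - k) * p ^ k" using kn by (simp add: power_add[symmetric])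
  have pk: "p ^ k \<noteq> 0" using p by (simp add: prime_gt_0_nat)
  have p0: "0 < p" using p by (simp add: prime_gt_0_nat)
  have cR: "card (rcosets H) = p ^ (n - k)" using e1 e2 pk p0 by auto
  have pR: "p dvd card (rcosets H)" using cR kn by simp
  have orbE: "orbit GH \<phi> Q1 = {\<phi> h Q1 | h. h \<in> H}" for Q1 unfolding orbit_def GH_def by simp
  have ordGH: "order GH = p ^ k" unfolding GH_def order_def using k by simp
  have RE: "rcosets H \<subseteq> EE" unfolding EE_def RCOSETS_def using r_coset_subset_G[OF Hs] by auto
  have finEE: "finite EE" unfolding EE_def using fin by (simp add: Pow_def[symmetric])
  have finR: "finite (rcosets H)" using finite_subset[OF RE finEE] .
  have phi_rc: "\<phi> h (H #> x) = H #> (x \<otimes> inv h)" if "h \<in> H" "x \<in> carrier G" for h x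
  proof -
    have "H #> x \<in> EE" unfolding EE_def using r_coset_subset_G[OF Hs that(2)] by simp
    then show ?thesis unfolding \<phi>_def using conj_rcos[OF H that] by simp
  qed
  have orb_in: "Q3 \<in> EE" if a1: "Q2 \<in> EE" and a2: "Q3 \<in> orbit GH \<phi> Q2" for Q2 Q3
  proof -
    obtain h where h: "h \<in> H" "Q3 = \<phi> h Q2" using a2 orbE by auto
    have "h \<in> carrier GH" unfolding GH_def using h by simp
    then show ?thesis using group_action.element_image[OF B _ a1] h by simp
  qed
  have orb_sub: "orbit GH \<phi> Q1 \<subseteq> rcosets H" if a1: "Q1 \<in> rcosets H" for Q1
  proof
    fix Q2 assume "Q2 \<in> orbit GH \<phi> Q1"
    then obtain h where h: "h \<in> H" "Q2 = \<phi> h Q1" using orbE by auto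
    obtain x where x: "x \<in> carrier G" "Q1 = H #> x" using a1 unfolding RCOSETS_def by auto
    have "Q2 = H #> (x \<otimes> inv h)" using phi_rc[OF h(1) x(1)] h x by simp
    moreover have "x \<otimes> inv h \<in> carrier G" using x h Hs by auto
    ultimately show "Q2 \<in> rcosets H" using rcosetsI[OF Hs] by simp
  qed
  have orb_dvd: "p dvd card (orbit GH \<phi> Q1) \<or> orbit GH \<phi> Q1 = {Q1}" if "Q1 \<in> EE" for Q1
  proof -
    have "card (orbit GH \<phi> Q1) * card (stabilizer GH \<phi> Q1) = p ^ k"
      using group_action.orbit_stabilizer_theorem[OF B that] ordGH by simp
    then have "card (orbit GH \<phi> Q1) dvd p ^ k"
      using dvd_triv_left[of "card (orbit GH \<phi> Q1)" "card (stabilizer GH \<phi> Q1)"] by simp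
    then obtain i where i: "card (orbit GH \<phi> Q1) = p ^ i" using divides_primepow_nat[OF p] by auto
    show ?thesis
    proof (cases i)
      case 0
      have Xo: "Q1 \<in> orbit GH \<phi> Q1" using group_action.orbit_refl[OF B that] .
      have "card (orbit GH \<phi> Q1) = 1" using i 0 by simp
      then obtain a where "orbit GH \<phi> Q1 = {a}" using card_1_singletonE by auto
      then have "orbit GH \<phi> Q1 = {Q1}" using Xo by simp
      then show ?thesis by simp
    next
      case (Suc j) then show ?thesis using i by simp
    qed
  qed
  define F where "F = {Q1 \<in> rcosets H. orbit GH \<phi> Q1 = {Q1}}"
  define S where "S = rcosets H - F"
  have pS: "p dvd card S"
  proof (rule dvd_card_partition[where f = "orbit GH \<phi>"])
    show "finite S" unfolding S_def using finR by simp
  next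
    fix Q1 assume Q1: "Q1 \<in> S"
    have XR: "Q1 \<in> rcosets H" using Q1 unfolding S_def by simp
    have XE: "Q1 \<in> EE" using XR RE by auto
    have nf: "orbit GH \<phi> Q1 \<noteq> {Q1}" using Q1 unfolding S_def F_def by auto
    have "orbit GH \<phi> Q1 \<subseteq> S"
    proof
      fix Q2 assume Q2: "Q2 \<in> orbit GH \<phi> Q1"
      have YR: "Q2 \<in> rcosets H" using orb_sub[OF XR] Q2 by auto
      have YE: "Q2 \<in> EE" using YR RE by auto
      have "orbit GH \<phi> Q2 \<noteq> {Q2}"
      proof
        assume o: "orbit GH \<phi> Q2 = {Q2}"
        have "Q1 \<in> orbit GH \<phi> Q2" using group_action.orbit_sym[OF B XE YE Q2] .
        then have "Q1 = Q2" using o by simp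
        then show False using nf o by simp
      qed
      then show "Q2 \<in> S" unfolding S_def F_def using YR by simp
    qed
    then show "Q1 \<in> orbit GH \<phi> Q1 \<and> orbit GH \<phi> Q1 \<subseteq> S \<and> p dvd card (orbit GH \<phi> Q1)"
      using group_action.orbit_refl[OF B XE] orb_dvd[OF XE] nf by simp
  next
    fix Q1 Q2 assume Q1: "Q1 \<in> S" and Q2: "Q2 \<in> orbit GH \<phi> Q1"
    have XE: "Q1 \<in> EE" using Q1 RE unfolding S_def by auto
    have YE: "Q2 \<in> EE" using orb_in[OF XE Q2] .
    have XY: "Q1 \<in> orbit GH \<phi> Q2" using group_action.orbit_sym[OF B XE YE Q2] .
    show "orbit GH \<phi> Q2 = orbit GH \<phi> Q1"
    proof
      show "orbit GH \<phi> Q2 \<subseteq> orbit GH \<phi> Q1"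
      proof
        fix Q3 assume Q3: "Q3 \<in> orbit GH \<phi> Q2"
        have ZE: "Q3 \<in> EE" using orb_in[OF YE Q3] .
        show "Q3 \<in> orbit GH \<phi> Q1" using group_action.orbit_trans[OF B XE YE ZE Q2 Q3] .
      qed
      show "orbit GH \<phi> Q1 \<subseteq> orbit GH \<phi> Q2"
      proof
        fix Q3 assume Q3: "Q3 \<in> orbit GH \<phi> Q1"
        have ZE: "Q3 \<in> EE" using orb_in[OF XE Q3] .
        show "Q3 \<in> orbit GH \<phi> Q2" using group_action.orbit_trans[OF B YE XE ZE XY Q3] .
      qed
    qed
  qed
  have FR: "F \<subseteq> rcosets H" unfolding F_def by auto
  have finF: "finite F" using finite_subset[OF FR finR] .
  have cS: "card S = card (rcosets H) - card F" unfolding S_def using FR finF by (simp add: card_Diff_subset)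
  have FleR: "card F \<le> card (rcosets H)" using card_mono[OF finR FR] .
  have pF: "p dvd card F" using dvd_diffD1[of p "card (rcosets H)" "card F"] pS cS pR FleR by simp
  have HF: "H \<in> F"
  proof -
    have H1: "H #> \<one> = H" using Hs by simp
    have HR: "H \<in> rcosets H" using rcosetsI[OF Hs one_closed] H1 by simp
    have fixH: "\<phi> h H = H" if "h \<in> H" for h
    proof -
      have "\<phi> h (H #> \<one>) = H #> (\<one> \<otimes> inv h)" using phi_rc[OF that one_closed] .
      moreover have ih: "inv h \<in> H" using subgroup.m_inv_closed[OF H that] .
      moreover have "\<one> \<otimes> inv h = inv h" using that Hs by auto
      ultimately show ?thesis using subgroup.rcos_const[OF H is_group ih] H1 by simp
    qed
    have "orbit GH \<phi> H = {H}"
      using orbE[of H] fixH subgroup.one_closed[OF H] by auto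
    then show ?thesis unfolding F_def using HR by simp
  qed
  have "card F \<noteq> 0" using HF finF by auto
  then have "card F \<ge> p" using pF by (simp add: dvd_imp_le)
  then have c2: "card F \<ge> 2" using prime_ge_2_nat[OF p] by simp
  obtain Q1 where Q1: "Q1 \<in> F" "Q1 \<noteq> H"
  proof -
    assume r: "\<And>Q1. Q1 \<in> F \<Longrightarrow> Q1 \<noteq> H \<Longrightarrow> thesis"
    show thesis
    proof (rule ccontr)
      assume "\<not> thesis"
      then have "F \<subseteq> {H}" using r by auto
      then have "card F \<le> 1" using card_mono[of "{H}" F] by simp
      then show False using c2 by simp
    qed
  qed
  then obtain x where x: "x \<in> carrier G" "Q1 = H #> x" unfolding F_def RCOSETS_def by auto
  have xH: "x \<notin> H"
  proof
    assume "x \<in> H"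
    then have "H #> x = H" using subgroup.rcos_const[OF H is_group] by simp
    then show False using x Q1 by simp
  qed
  have fix': "H #> (x \<otimes> inv h) = H #> x" if "h \<in> H" for h
  proof -
    have "\<phi> h Q1 \<in> orbit GH \<phi> Q1" using orbE that by auto
    then have "\<phi> h Q1 = Q1" using Q1 unfolding F_def by simp
    then show ?thesis using phi_rc[OF that x(1)] x by simp
  qed
  have "x \<otimes> h \<otimes> inv x \<in> H" if h: "h \<in> H" for h
  proof -
    have ih: "inv h \<in> H" using subgroup.m_inv_closed[OF H h] .
    have hc: "h \<in> carrier G" using h Hs by auto
    have "H #> (x \<otimes> h) = H #> x" using fix'[OF ih] hc by simp
    moreover have "x \<otimes> h \<in> H #> (x \<otimes> h)" using rcos_self[OF _ H] x hc by simp
    ultimately have "x \<otimes> h \<in> H #> x" by simp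
    then show ?thesis using subgroup.rcos_module_imp[OF H is_group x(1)] by simp
  qed
  then show ?thesis using x xH by auto
qed
lemma (in group) pgroup_maximal_normal:
  fixes p n :: nat
  assumes p: "Factorial_Ring.prime p" and fin: "finite (carrier G)" and ord: "order G = p ^ n"
    and M: "maximal_subgroup G M"
  shows "M \<lhd> G"
proof -
  have MG: "subgroup M G" and Mne: "M \<noteq> carrier G"
    and mx: "\<And>K. subgroup K G \<Longrightarrow> M \<subseteq> K \<Longrightarrow> K = M \<or> K = carrier G"
    using M unfolding maximal_subgroup_def by auto
  have Ms: "M \<subseteq> carrier G" using subgroup.subset[OF MG] .
  have finM: "finite M" using finite_subset[OF Ms fin] .
  define N where "N = {x \<in> carrier G. \<forall>h\<in>M. x \<otimes> h \<otimes> inv x \<in> M}"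
  have surjN: "\<exists>h'\<in>M. x \<otimes> h' \<otimes> inv x = h" if x: "x \<in> N" and h: "h \<in> M" for x h
  proof -
    have xc: "x \<in> carrier G" using x unfolding N_def by simp
    let ?f = "\<lambda>h. x \<otimes> h \<otimes> inv x"
    have img: "?f ` M \<subseteq> M"
    proof
      fix y assume "y \<in> ?f ` M"
      then obtain a where a: "a \<in> M" "y = ?f a" by (rule imageE)
      have "\<forall>h\<in>M. x \<otimes> h \<otimes> inv x \<in> M" using x unfolding N_def by simp
      then show "y \<in> M" using a by simp
    qed
    have inj: "inj_on ?f M"
    proof (rule inj_onI)
      fix a b assume a: "a \<in> M" and b: "b \<in> M" and e: "?f a = ?f b"
      have ac: "a \<in> carrier G" and bc: "b \<in> carrier G" using a b Ms by auto
      have 1: "inv x \<otimes> (?f a) \<otimes> x = a" using ac xc by (simp add: m_assoc) (simp add: m_assoc[symmetric])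
      have 2: "inv x \<otimes> (?f b) \<otimes> x = b" using bc xc by (simp add: m_assoc) (simp add: m_assoc[symmetric])
      have "a = inv x \<otimes> (?f a) \<otimes> x" using 1 by (rule sym)
      also have "\<dots> = inv x \<otimes> (?f b) \<otimes> x" by (simp only: e)
      also have "\<dots> = b" by (rule 2)
      finally show "a = b" .
    qed
    have "?f ` M = M" using endo_inj_surj[OF finM img inj] .
    then have "h \<in> ?f ` M" using h by simp
    then obtain h' where "h' \<in> M" "h = ?f h'" by (rule imageE)
    then show ?thesis by auto
  qed
  have NG: "subgroup N G"
  proof (rule subgroupI)
    show "N \<subseteq> carrier G" unfolding N_def by auto
    show "N \<noteq> {}"
    proof -
      have "\<one> \<in> N" unfolding N_def using Ms by auto
      then show ?thesis by auto
    qed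
  next
    fix a assume a: "a \<in> N"
    have ac: "a \<in> carrier G" using a unfolding N_def by simp
    have "inv a \<otimes> h \<otimes> inv (inv a) \<in> M" if h: "h \<in> M" for h
    proof -
      obtain h' where h': "h' \<in> M" "a \<otimes> h' \<otimes> inv a = h" using surjN[OF a h] by auto
      have hc: "h' \<in> carrier G" using h' Ms by auto
      have "inv a \<otimes> h \<otimes> inv (inv a) = h'" using h'(2)[symmetric] ac hc by (simp add: m_assoc) (simp add: m_assoc[symmetric])
      then show ?thesis using h' by simp
    qed
    then show "inv a \<in> N" unfolding N_def using ac by simp
  next
    fix a b assume a: "a \<in> N" and b: "b \<in> N"
    have ac: "a \<in> carrier G" and bc: "b \<in> carrier G" using a b unfolding N_def by auto
    have "a \<otimes> b \<otimes> h \<otimes> inv (a \<otimes> b) \<in> M" if h: "h \<in> M" for h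
    proof -
      have hc: "h \<in> carrier G" using h Ms by auto
      have "b \<otimes> h \<otimes> inv b \<in> M" using b h unfolding N_def by auto
      then have "a \<otimes> (b \<otimes> h \<otimes> inv b) \<otimes> inv a \<in> M" using a unfolding N_def by auto
      moreover have "a \<otimes> (b \<otimes> h \<otimes> inv b) \<otimes> inv a = a \<otimes> b \<otimes> h \<otimes> inv (a \<otimes> b)"
        using ac bc hc by (simp add: m_assoc inv_mult_group)
      ultimately show ?thesis by simp
    qed
    then show "a \<otimes> b \<in> N" unfolding N_def using ac bc by simp
  qed
  have MN: "M \<subseteq> N" unfolding N_def using Ms subgroup.m_closed[OF MG] subgroup.m_inv_closed[OF MG] by auto
  obtain x where x: "x \<in> carrier G - M" "\<forall>h\<in>M. x \<otimes> h \<otimes> inv x \<in> M"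
    using pgroup_normalizer_grows[OF p fin ord MG Mne] by auto
  have "x \<in> N" unfolding N_def using x by auto
  then have "N \<noteq> M" using x by auto
  then have "N = carrier G" using mx[OF NG MN] by auto
  then show ?thesis unfolding normal_inv_iff N_def using MG by auto
qed
theorem lemma6p8:
  fixes G (structure) and p :: nat
  assumes "Factorial_Ring.prime p"
    and "group G"
    and "finite (carrier G)"
    and "\<exists>n. order G = p ^ n"
    and "\<And>H. subgroup H G \<Longrightarrow> \<not> abelian_set G H \<Longrightarrow> centralizer G H \<subseteq> H"
    and "g \<in> carrier G - frattini G"
  shows "abelian_set G (centralizer G {g})"
proof -
  interpret group G using assms(2) .
  obtain n where ord: "order G = p ^ n" using assms(4) by auto
  have gc: "g \<in> carrier G" using assms(6) by simp
  have "g \<notin> \<Inter> {H. maximal_subgroup G H}" using assms(6) unfolding frattini_def by simp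
  then obtain M where Mmax: "maximal_subgroup G M" and gM: "g \<notin> M" by auto
  have MN: "M \<lhd> G" using pgroup_maximal_normal[OF assms(1) assms(3) ord Mmax] .
  have MG: "subgroup M G" and mx: "\<And>K. subgroup K G \<Longrightarrow> M \<subseteq> K \<Longrightarrow> K = M \<or> K = carrier G"
    using Mmax unfolding maximal_subgroup_def by auto
  have Ms: "M \<subseteq> carrier G" using subgroup.subset[OF MG] .
  define C where "C = centralizer G {g}"
  define D where "D = centralizer G C"
  have Cs: "C \<subseteq> carrier G" unfolding C_def centralizer_def by auto
  have CG: "subgroup C G" unfolding C_def using centralizer_subgroup gc by simp
  have DG: "subgroup D G" unfolding D_def using centralizer_subgroup[OF Cs] .
  have gC: "g \<in> C" unfolding C_def centralizer_def using gc by simp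
  have Cg: "\<And>c. c \<in> C \<Longrightarrow> c \<otimes> g = g \<otimes> c" unfolding C_def centralizer_def by simp
  have Dc: "\<And>d c. d \<in> D \<Longrightarrow> c \<in> C \<Longrightarrow> d \<otimes> c = c \<otimes> d" unfolding D_def centralizer_def by simp
  have DC: "D \<subseteq> C"
  proof
    fix d assume d: "d \<in> D"
    have dc: "d \<in> carrier G" using d unfolding D_def centralizer_def by simp
    have "d \<otimes> g = g \<otimes> d" using Dc[OF d gC] .
    then show "d \<in> C" unfolding C_def centralizer_def using dc by simp
  qed
  have gD: "g \<in> D"
  proof -
    have "g \<otimes> c = c \<otimes> g" if "c \<in> C" for c using Cg[OF that] by simp
    then show ?thesis unfolding D_def centralizer_def using gc by simp
  qed
  define K where "K = C \<inter> M"
  have KG: "subgroup K G" unfolding K_def using subgroup_Int[OF CG MG] .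
  have Kab: "abelian_set G K"
  proof (rule ccontr)
    assume "\<not> abelian_set G K"
    then have sub: "centralizer G K \<subseteq> K" using assms(5)[OF KG] by simp
    have "g \<otimes> y = y \<otimes> g" if "y \<in> K" for y using Cg[of y] that unfolding K_def by simp
    then have "g \<in> centralizer G K" unfolding centralizer_def using gc by simp
    then have "g \<in> M" using sub unfolding K_def by auto
    then show False using gM by simp
  qed
  have SI: "second_isomorphism_grp M G D"
    unfolding second_isomorphism_grp_def second_isomorphism_grp_axioms_def using MN DG by simp
  have MDG: "subgroup (M <#> D) G" using second_isomorphism_grp.normal_set_mult_subgroup[OF SI] .
  have MMD: "M \<subseteq> M <#> D"
  proof
    fix m assume m: "m \<in> M"
    have "m = m \<otimes> \<one>" using m Ms by auto
    moreover have "\<one> \<in> D" using subgroup.one_closed[OF DG] .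
    ultimately show "m \<in> M <#> D" unfolding set_mult_def using m by blast
  qed
  have gMD: "g \<in> M <#> D"
  proof -
    have "g = \<one> \<otimes> g" using gc by simp
    moreover have "\<one> \<in> M" using subgroup.one_closed[OF MG] .
    ultimately show ?thesis unfolding set_mult_def using gD by blast
  qed
  have MDall: "M <#> D = carrier G" using mx[OF MDG MMD] gMD gM by auto
  have decomp: "\<exists>m d. m \<in> K \<and> d \<in> D \<and> x = m \<otimes> d" if x: "x \<in> C" for x
  proof -
    have "x \<in> M <#> D" using x Cs MDall by auto
    then obtain m d where md: "m \<in> M" "d \<in> D" "x = m \<otimes> d" unfolding set_mult_def by auto
    have dC: "d \<in> C" using md(2) DC by auto
    have mc: "m \<in> carrier G" and dc: "d \<in> carrier G" using md Ms dC Cs by auto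
    have "m = x \<otimes> inv d" using md(3) mc dc by (simp add: m_assoc)
    moreover have "x \<otimes> inv d \<in> C" using subgroup.m_closed[OF CG x subgroup.m_inv_closed[OF CG dC]] .
    ultimately have "m \<in> K" unfolding K_def using md(1) by simp
    then show ?thesis using md by auto
  qed
  show ?thesis unfolding abelian_set_def C_def[symmetric]
  proof (intro ballI)
    fix x y assume x: "x \<in> C" and y: "y \<in> C"
    obtain m d where m: "m \<in> K" "d \<in> D" "x = m \<otimes> d" using decomp[OF x] by auto
    obtain m' d' where m': "m' \<in> K" "d' \<in> D" "y = m' \<otimes> d'" using decomp[OF y] by auto
    have KC: "K \<subseteq> C" unfolding K_def by auto
    have mc: "m \<in> carrier G" "m' \<in> carrier G" using m(1) m'(1) KC Cs by auto
    have dc: "d \<in> carrier G" "d' \<in> carrier G" using m(2) m'(2) DC Cs by auto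
    have c1: "d \<otimes> m' = m' \<otimes> d" using Dc[OF m(2)] m'(1) KC by auto
    have c2: "d' \<otimes> m = m \<otimes> d'" using Dc[OF m'(2)] m(1) KC by auto
    have c3: "d \<otimes> d' = d' \<otimes> d" using Dc[OF m(2)] m'(2) DC by auto
    have c4: "m \<otimes> m' = m' \<otimes> m" using Kab m(1) m'(1) unfolding abelian_set_def by auto
    have "x \<otimes> y = m \<otimes> (d \<otimes> m') \<otimes> d'" using m(3) m'(3) mc dc by (simp add: m_assoc)
    also have "\<dots> = (m \<otimes> m') \<otimes> (d \<otimes> d')" using c1 mc dc by (simp add: m_assoc)
    also have "\<dots> = (m' \<otimes> m) \<otimes> (d' \<otimes> d)" using c3 c4 by simp
    also have "\<dots> = m' \<otimes> (d' \<otimes> m) \<otimes> d" using c2 mc dc by (simp add: m_assoc)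
    also have "\<dots> = y \<otimes> x" using m(3) m'(3) mc dc by (simp add: m_assoc)
    finally show "x \<otimes> y = y \<otimes> x" .
  qed
qed
end
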